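(* For the games $\mathcal G$ and $\mathcal G^{\rm sm}$: (a) a B-QGNE of $\mathcal G$ always exists; (b) a QGNE of $\mathcal G^{\rm sm}$ and a restricted B-QGNE of $\mathcal G$ exist provided $\mathcal P\ne\emptyset$; (c) if $\mathbf x^\star$ is a (restricted) B-QGNE of $\mathcal G$ satisfying constraint (C$_q$) for all $q=1,\dots,Q$, then $\mathbf x^\star$ is a QGNE of $\mathcal G^{\rm sm}$; (d) if $\mathbf x^\star$ is a QGNE of $\mathcal G^{\rm sm}$, then $\mathbf x^\star$ is a restricted B-QGNE of $\mathcal G$.
   Context: Fix integers $Q,J\ge1$, noise power $\sigma^2>0$, budgets $P_q>0$ ($q=1,\dots,Q$) and $P^{J}_j>0$ ($j=1,\dots,J$), and positive channel gains $H^{SD}_{qq},H^{SE}_{qe},H^{JD}_{jq},H^{JE}_{je}$. Variables: $p_q\ge0$ and $p^J_{jq}\ge0$; $\mathbf p^J_q=(p^J_{jq})_{j=1}^J$, $\mathbf x_q=(p_q,\mathbf p^J_q)$, $\mathbf x=(\mathbf x_q)_{q=1}^Q$, $\mathbf p^J_{-q}=(\mathbf p^J_r)_{r\ne q}$. Define $r_{qq}(\mathbf x_q)=\log\big(1+\frac{H^{SD}_{qq}p_q}{\sigma^2+\sum_jH^{JD}_{jq}p^J_{jq}}\big)$, $r_{qe}(\mathbf x_q)=\log\big(1+\frac{H^{SE}_{qe}p_q}{\sigma^2+\sum_jH^{JE}_{je}p^J_{jq}}\big)$, $\tilde r^s_q=r_{qq}-r_{qe}$, $r^s_q=\max(0,\tilde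 r^s_q)$. Constraint (C$_q$): $\sum_{j=1}^J(H^{SD}_{qq}H^{JE}_{je}-H^{SE}_{qe}H^{JD}_{jq})p^J_{jq}+(H^{SD}_{qq}-H^{SE}_{qe})\sigma^2\ge0$. $\mathcal P_q(\mathbf p^J_{-q})=\{\mathbf x_q\ge\mathbf 0: p_q\le P_q,\ \sum_{r=1}^Qp^J_{jr}\le P^J_j\ \forall j\}$ (with $p^J_{jr}$, $r\neq q$, fixed by $\mathbf p^J_{-q}$); $\mathcal P^{\rm sm}_q(\mathbf p^J_{-q})=\{\mathbf x_q\in\mathcal P_q(\mathbf p^J_{-q}):\text{(C}_q\text{) holds}\}$; $\mathcal P=\{\mathbf x\ge\mathbf 0: p_q\le P_q \text{ and (C}_q\text{) for all }q,\ \sum_{r}p^J_{jr}\le P^J_j\ \forall j\}$. Game $\mathcal G$: player $q$ maximizes $r^s_q(\mathbf x_q)$ over $\mathcal P_q(\mathbf p^J_{-q})$; game $\mathcal G^{\rm sm}$: player $q$ maximizes $\tilde r^s_q(\mathbf x_q)$ over $\mathcal P^{\rm sm}_q(\mathbf p^J_{-q})$. Let $r^{s\prime}_q(\mathbf x_q;\mathbf d)$ denote the one-sided directional derivative of $r^s_q$ at $\mathbf x_q$ in direction $\mathbf d$. A B-QGNE of $\mathcal G$ is $\mathbf x^\star$ such that for all $q$: $\mathbf x^\star_q\in\mathcal P_q(\mathbf p^{J\star}_{-q})$ and $r^{s\prime}_q(\mathbf x^\star_q;\mathbf x_q-\mathbf x^\star_q)\le0$ for all $\mathbf x_q\in\mathcal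 P_q(\mathbf p^{J\star}_{-q})$. A restricted B-QGNE of $\mathcal G$ is $\mathbf x^\star$ such that for all $q$: $\mathbf x^\star_q\in\mathcal P_q(\mathbf p^{J\star}_{-q})$ and $r^{s\prime}_q(\mathbf x^\star_q;\mathbf x_q-\mathbf x^\star_q)\le0$ for all $\mathbf x_q\in\mathcal P^{\rm sm}_q(\mathbf p^{J\star}_{-q})$. A QGNE of $\mathcal G^{\rm sm}$ is $\mathbf x^\star$ such that for all $q$: $\mathbf x^\star_q\in\mathcal P^{\rm sm}_q(\mathbf p^{J\star}_{-q})$ and $\nabla\tilde r^s_q(\mathbf x^\star_q)^T(\mathbf x_q-\mathbf x^\star_q)\le0$ for all $\mathbf x_q\in\mathcal P^{\rm sm}_q(\mathbf p^{J\star}_{-q})$. *)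

theory Defs
  imports "HOL-Analysis.Analysis"
begin

text \<open>Indices are 0-based: players q < Q, jammers j < J.
  A global profile is a pair (p, pJ) with p q = p_q and pJ j q = p^J_{jq}.
  A local strategy of player q is a pair (pq, pjq) with pjq j = p^J_{jq}.
  The eavesdropper index e is fixed, so H^{SE}_{qe} = HSE q and H^{JE}_{je} = HJE j;
  H^{SD}_{qq} = HSD q and H^{JD}_{jq} = HJD j q.\<close>

record sys =
  nQ :: nat
  nJ :: nat
  sig2 :: real
  Pw :: "nat \<Rightarrow> real"
  PJw :: "nat \<Rightarrow> real"
  HSD :: "nat \<Rightarrow> real"
  HSE :: "nat \<Rightarrow> real"
  HJD :: "nat \<Rightarrow> nat \<Rightarrow> real"
  HJE :: "nat \<Rightarrow> real"

definition r_qq :: "sys \<Rightarrow> nat \<Rightarrow> real \<Rightarrow> (nat \<Rightarrow> real) \<Rightarrow> real" where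
  "r_qq S q pq pjq = ln (1 + HSD S q * pq / (sig2 S + (\<Sum>j<nJ S. HJD S j q * pjq j)))"

definition r_qe :: "sys \<Rightarrow> nat \<Rightarrow> real \<Rightarrow> (nat \<Rightarrow> real) \<Rightarrow> real" where
  "r_qe S q pq pjq = ln (1 + HSE S q * pq / (sig2 S + (\<Sum>j<nJ S. HJE S j * pjq j)))"

definition rs_tilde :: "sys \<Rightarrow> nat \<Rightarrow> real \<Rightarrow> (nat \<Rightarrow> real) \<Rightarrow> real" where
  "rs_tilde S q pq pjq = r_qq S q pq pjq - r_qe S q pq pjq"

definition rs :: "sys \<Rightarrow> nat \<Rightarrow> real \<Rightarrow> (nat \<Rightarrow> real) \<Rightarrow> real" where
  "rs S q pq pjq = max 0 (rs_tilde S q pq pjq)"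

definition Cq :: "sys \<Rightarrow> nat \<Rightarrow> (nat \<Rightarrow> real) \<Rightarrow> bool" where
  "Cq S q pjq \<longleftrightarrow>
     (\<Sum>j<nJ S. (HSD S q * HJE S j - HSE S q * HJD S j q) * pjq j)
       + (HSD S q - HSE S q) * sig2 S \<ge> 0"

text \<open>P_q(p^J_{-q}): the jamming powers of the other players r \<noteq> q are taken from pJ.\<close>
definition Pq :: "sys \<Rightarrow> (nat \<Rightarrow> nat \<Rightarrow> real) \<Rightarrow> nat \<Rightarrow> real \<Rightarrow> (nat \<Rightarrow> real) \<Rightarrow> bool" where
  "Pq S pJ q pq pjq \<longleftrightarrow>
     0 \<le> pq \<and> (\<forall>j<nJ S. 0 \<le> pjq j) \<and> pq \<le> Pw S q \<and>
     (\<forall>j<nJ S. pjq j + (\<Sum>r\<in>{..<nQ S} - {q}. pJ j r) \<le> PJw S j)"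

definition Pq_sm :: "sys \<Rightarrow> (nat \<Rightarrow> nat \<Rightarrow> real) \<Rightarrow> nat \<Rightarrow> real \<Rightarrow> (nat \<Rightarrow> real) \<Rightarrow> bool" where
  "Pq_sm S pJ q pq pjq \<longleftrightarrow> Pq S pJ q pq pjq \<and> Cq S q pjq"

definition Pset :: "sys \<Rightarrow> (nat \<Rightarrow> real) \<Rightarrow> (nat \<Rightarrow> nat \<Rightarrow> real) \<Rightarrow> bool" where
  "Pset S p pJ \<longleftrightarrow>
     (\<forall>q<nQ S. 0 \<le> p q \<and> p q \<le> Pw S q \<and> (\<forall>j<nJ S. 0 \<le> pJ j q) \<and> Cq S q (\<lambda>j. pJ j q)) \<and>
     (\<forall>j<nJ S. (\<Sum>r<nQ S. pJ j r) \<le> PJw S j)"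

definition dir_deriv :: "(real \<Rightarrow> (nat \<Rightarrow> real) \<Rightarrow> real) \<Rightarrow> real \<Rightarrow> (nat \<Rightarrow> real)
    \<Rightarrow> real \<Rightarrow> (nat \<Rightarrow> real) \<Rightarrow> real" where
  "dir_deriv f pq pjq dp dpj =
     Lim (at_right 0) (\<lambda>t. (f (pq + t * dp) (\<lambda>j. pjq j + t * dpj j) - f pq pjq) / t)"

definition grad_dot :: "nat \<Rightarrow> (real \<Rightarrow> (nat \<Rightarrow> real) \<Rightarrow> real) \<Rightarrow> real \<Rightarrow> (nat \<Rightarrow> real)
    \<Rightarrow> real \<Rightarrow> (nat \<Rightarrow> real) \<Rightarrow> real" where
  "grad_dot J f pq pjq dp dpj =
     deriv (\<lambda>s. f s pjq) pq * dp
     + (\<Sum>j<J. deriv (\<lambda>s. f pq (pjq(j := s))) (pjq j) * dpj j)"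

definition BQGNE :: "sys \<Rightarrow> (nat \<Rightarrow> real) \<Rightarrow> (nat \<Rightarrow> nat \<Rightarrow> real) \<Rightarrow> bool" where
  "BQGNE S p pJ \<longleftrightarrow> (\<forall>q<nQ S.
     Pq S pJ q (p q) (\<lambda>j. pJ j q) \<and>
     (\<forall>pq pjq. Pq S pJ q pq pjq \<longrightarrow>
        dir_deriv (rs S q) (p q) (\<lambda>j. pJ j q) (pq - p q) (\<lambda>j. pjq j - pJ j q) \<le> 0))"

definition restricted_BQGNE :: "sys \<Rightarrow> (nat \<Rightarrow> real) \<Rightarrow> (nat \<Rightarrow> nat \<Rightarrow> real) \<Rightarrow> bool" where
  "restricted_BQGNE S p pJ \<longleftrightarrow> (\<forall>q<nQ S.
     Pq S pJ q (p q) (\<lambda>j. pJ j q) \<and>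
     (\<forall>pq pjq. Pq_sm S pJ q pq pjq \<longrightarrow>
        dir_deriv (rs S q) (p q) (\<lambda>j. pJ j q) (pq - p q) (\<lambda>j. pjq j - pJ j q) \<le> 0))"

definition QGNE_sm :: "sys \<Rightarrow> (nat \<Rightarrow> real) \<Rightarrow> (nat \<Rightarrow> nat \<Rightarrow> real) \<Rightarrow> bool" where
  "QGNE_sm S p pJ \<longleftrightarrow> (\<forall>q<nQ S.
     Pq_sm S pJ q (p q) (\<lambda>j. pJ j q) \<and>
     (\<forall>pq pjq. Pq_sm S pJ q pq pjq \<longrightarrow>
        grad_dot (nJ S) (rs_tilde S q) (p q) (\<lambda>j. pJ j q) (pq - p q) (\<lambda>j. pjq j - pJ j q) \<le> 0))"

definition valid_sys :: "sys \<Rightarrow> bool" where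
  "valid_sys S \<longleftrightarrow> nQ S \<ge> 1 \<and> nJ S \<ge> 1 \<and> sig2 S > 0 \<and>
     (\<forall>q<nQ S. Pw S q > 0 \<and> HSD S q > 0 \<and> HSE S q > 0) \<and>
     (\<forall>j<nJ S. PJw S j > 0 \<and> HJE S j > 0 \<and> (\<forall>q<nQ S. HJD S j q > 0))"

end

theory Submission
  imports Defs
begin

lemma deriv_lnterm:
  fixes X Y :: "real \<Rightarrow> real"
  assumes "(X has_real_derivative X') (at t0)" "(Y has_real_derivative Y') (at t0)"
    "c + Y t0 > 0" "a * X t0 \<ge> 0"
  shows "((\<lambda>t. ln (1 + a * X t / (c + Y t))) has_real_derivative
      (a * X' / (c + Y t0 + a * X t0) - a * X t0 * Y' / ((c + Y t0) * (c + Y t0 + a * X t0)))) (at t0)"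
proof -
  have p: "1 + a * X t0 / (c + Y t0) > 0" using assms(3,4) by (simp add: add_pos_nonneg)
  have q: "c + Y t0 + a * X t0 > 0" using assms(3,4) by simp
  have h1: "((\<lambda>t. 1 + a * X t / (c + Y t)) has_real_derivative
      (a * X' * (c + Y t0) - a * X t0 * Y') / (c + Y t0)^2) (at t0)"
    apply (rule derivative_eq_intros assms refl)+
    using assms(3) by (auto simp add: field_simps power2_eq_square)
  have h2: "((\<lambda>t. ln (1 + a * X t / (c + Y t))) has_real_derivative
      inverse (1 + a * X t0 / (c + Y t0)) * ((a * X' * (c + Y t0) - a * X t0 * Y') / (c + Y t0)^2)) (at t0)"
    using DERIV_chain2[OF DERIV_ln[OF p] h1] .
  have e: "inverse (1 + a * X t0 / (c + Y t0)) * ((a * X' * (c + Y t0) - a * X t0 * Y') / (c + Y t0)^2)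
     = a * X' / (c + Y t0 + a * X t0) - a * X t0 * Y' / ((c + Y t0) * (c + Y t0 + a * X t0))"
  proof -
    define D where "D = c + Y t0"
    define N where "N = D + a * X t0"
    have D: "D > 0" using assms(3) D_def by simp
    have N: "N > 0" using q D_def N_def by simp
    have 1: "1 + a * X t0 / D = N / D" using D N_def by (simp add: field_simps)
    have "inverse (N / D) * ((a * X' * D - a * X t0 * Y') / D^2) = a * X' / N - a * X t0 * Y' / (D * N)"
      using D N by (simp add: field_simps power2_eq_square)
    then show ?thesis using 1 unfolding D_def N_def by simp
  qed
  show ?thesis using h2 e by simp
qed
lemma max_quot_tendsto:
  fixes g :: "real \<Rightarrow> real"
  assumes d: "(g has_real_derivative D) (at 0)"
  shows "((\<lambda>t. (max 0 (g t) - max 0 (g 0)) / t) \<longlongrightarrow>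
     (if g 0 > 0 then D else if g 0 < 0 then 0 else max 0 D)) (at_right 0)"
proof -
  have "(g has_real_derivative D) (at_right 0)"
    by (rule has_field_derivative_at_within[OF d])
  then have lim: "((\<lambda>t. (g t - g 0) / t) \<longlongrightarrow> D) (at_right 0)"
    unfolding has_field_derivative_iff by simp
  have "isCont g 0" using d by (rule DERIV_isCont)
  then have c: "(g \<longlongrightarrow> g 0) (at_right 0)"
    by (simp add: isCont_def filterlim_at_split)
  have pos: "eventually (\<lambda>t::real. t > 0) (at_right 0)"
    by (simp add: eventually_at_right_less)
  consider "g 0 > 0" | "g 0 < 0" | "g 0 = 0" by linarith
  then show ?thesis
  proof cases
    case 1
    have "eventually (\<lambda>t. g t > 0) (at_right 0)" using order_tendstoD(1)[OF c 1] .
    then have "eventually (\<lambda>t. (g t - g 0) / t = (max 0 (g t) - max 0 (g 0)) / t) (at_right 0)"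
      by eventually_elim (use 1 in auto)
    then have "((\<lambda>t. (max 0 (g t) - max 0 (g 0)) / t) \<longlongrightarrow> D) (at_right 0)"
      by (rule tendsto_cong[THEN iffD1, OF _ lim])
    then show ?thesis using 1 by simp
  next
    case 2
    have "eventually (\<lambda>t. g t < 0) (at_right 0)" using order_tendstoD(2)[OF c 2] .
    then have "eventually (\<lambda>t. 0 = (max 0 (g t) - max 0 (g 0)) / t) (at_right 0)"
      by eventually_elim (use 2 in auto)
    then have "((\<lambda>t. (max 0 (g t) - max 0 (g 0)) / t) \<longlongrightarrow> 0) (at_right 0)"
      by (rule tendsto_cong[THEN iffD1, OF _ tendsto_const])
    then show ?thesis using 2 by simp
  next
    case 3
    have ev: "eventually (\<lambda>t. max 0 ((g t - g 0) / t) = (max 0 (g t) - max 0 (g 0)) / t) (at_right 0)"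
      using pos by eventually_elim (use 3 in \<open>auto simp: max_def divide_le_0_iff zero_le_divide_iff\<close>)
    have l2: "((\<lambda>t. max 0 ((g t - g 0) / t)) \<longlongrightarrow> max 0 D) (at_right 0)"
      by (intro tendsto_max tendsto_const lim)
    have "((\<lambda>t. (max 0 (g t) - max 0 (g 0)) / t) \<longlongrightarrow> max 0 D) (at_right 0)"
      by (rule tendsto_cong[THEN iffD1, OF ev l2])
    then show ?thesis using 3 by simp
  qed
qed
lemma affine_deriv: "((\<lambda>t::real. A + t * B) has_real_derivative B) (at t0)"
  by (rule derivative_eq_intros refl)+ simp

lemma sum_upd: "j < (J::nat) \<Longrightarrow> (\<Sum>i<J. (w i::real) * (f(j := s)) i) = (\<Sum>i<J. w i * f i) + w j * (s - f j)"
proof -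
  assume j: "j < J"
  have "(\<Sum>i<J. w i * (f(j := s)) i) = (\<Sum>i<J. w i * f i + (if j = i then w i * (s - f i) else 0))"
    by (rule sum.cong) (auto simp: right_diff_distrib)
  also have "\<dots> = (\<Sum>i<J. w i * f i) + w j * (s - f j)"
    using j by (simp add: sum.distrib)
  finally show ?thesis .
qed

lemma sum_lin: "(\<Sum>j<J. (w j::real) * (f j + t * d j)) = (\<Sum>j<J. w j * f j) + t * (\<Sum>j<J. w j * d j)"
proof -
  have "(\<Sum>j<J. w j * (f j + t * d j)) = (\<Sum>j<J. w j * f j + t * (w j * d j))"
    by (rule sum.cong) (auto simp: algebra_simps)
  then show ?thesis by (simp add: sum.distrib sum_distrib_left)
qed

lemma lnterm_pos:
  assumes "c > 0" "\<forall>j<J. w j \<ge> 0 \<and> f j \<ge> (0::real)"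
  shows "c + (\<Sum>j<J. w j * f j) > 0"
proof -
  have "(\<Sum>j<J. w j * f j) \<ge> 0" using assms(2) by (intro sum_nonneg) auto
  then show ?thesis using assms(1) by linarith
qed

lemma rs_tilde_deriv:
  assumes sig: "sig2 S > 0" and ha: "HSD S q \<ge> 0" and hb: "HSE S q \<ge> 0"
    and hw: "\<forall>j<nJ S. HJD S j q \<ge> 0 \<and> HJE S j \<ge> 0 \<and> pjq j \<ge> 0" and hp: "pq \<ge> 0"
  shows "((\<lambda>t. rs_tilde S q (pq + t * dp) (\<lambda>j. pjq j + t * dpj j)) has_real_derivative
           grad_dot (nJ S) (rs_tilde S q) pq pjq dp dpj) (at 0)"
proof -
  define a where "a = HSD S q"
  define b where "b = HSE S q"
  define c where "c = sig2 S"
  define J where "J = nJ S"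
  define Ad where "Ad = (\<Sum>j<J. HJD S j q * pjq j)"
  define Ae where "Ae = (\<Sum>j<J. HJE S j * pjq j)"
  define Wd where "Wd = (\<Sum>j<J. HJD S j q * dpj j)"
  define We where "We = (\<Sum>j<J. HJE S j * dpj j)"
  have Dd: "c + Ad > 0" unfolding c_def Ad_def J_def using sig hw by (intro lnterm_pos) auto
  have De: "c + Ae > 0" unfolding c_def Ae_def J_def using sig hw by (intro lnterm_pos) auto
  have a0: "a * pq \<ge> 0" "b * pq \<ge> 0" using ha hb hp a_def b_def by auto
  have Nd: "c + Ad + a * pq > 0" "c + Ae + b * pq > 0" using Dd De a0 by auto
  have fe: "(\<lambda>t. rs_tilde S q (pq + t * dp) (\<lambda>j. pjq j + t * dpj j)) =
     (\<lambda>t. ln (1 + a * (pq + t * dp) / (c + (Ad + t * Wd))) - ln (1 + b * (pq + t * dp) / (c + (Ae + t * We))))"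
    by (rule ext) (simp add: rs_tilde_def r_qq_def r_qe_def sum_lin a_def b_def c_def J_def Ad_def Ae_def Wd_def We_def)
  have d1: "((\<lambda>t. ln (1 + a * (pq + t * dp) / (c + (Ad + t * Wd)))) has_real_derivative
     (a * dp / (c + Ad + a * pq) - a * pq * Wd / ((c + Ad) * (c + Ad + a * pq)))) (at 0)"
    using deriv_lnterm[of "\<lambda>t. pq + t * dp" dp 0 "\<lambda>t. Ad + t * Wd" Wd c a] affine_deriv Dd a0
    by simp
  have d2: "((\<lambda>t. ln (1 + b * (pq + t * dp) / (c + (Ae + t * We)))) has_real_derivative
     (b * dp / (c + Ae + b * pq) - b * pq * We / ((c + Ae) * (c + Ae + b * pq)))) (at 0)"
    using deriv_lnterm[of "\<lambda>t. pq + t * dp" dp 0 "\<lambda>t. Ae + t * We" We c b] affine_deriv De a0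
    by simp
  have dir: "((\<lambda>t. rs_tilde S q (pq + t * dp) (\<lambda>j. pjq j + t * dpj j)) has_real_derivative
     (a * dp / (c + Ad + a * pq) - a * pq * Wd / ((c + Ad) * (c + Ad + a * pq)))
     - (b * dp / (c + Ae + b * pq) - b * pq * We / ((c + Ae) * (c + Ae + b * pq)))) (at 0)"
    unfolding fe by (rule DERIV_diff[OF d1 d2])
  have fp: "(\<lambda>s. rs_tilde S q s pjq) = (\<lambda>s. ln (1 + a * s / (c + Ad)) - ln (1 + b * s / (c + Ae)))"
    by (rule ext) (simp add: rs_tilde_def r_qq_def r_qe_def a_def b_def c_def J_def Ad_def Ae_def)
  have p1: "((\<lambda>s. ln (1 + a * s / (c + Ad))) has_real_derivative a / (c + Ad + a * pq)) (at pq)"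
    using deriv_lnterm[of "\<lambda>s. s" 1 pq "\<lambda>s. Ad" 0 c a] DERIV_ident DERIV_const Dd a0 by simp
  have p2: "((\<lambda>s. ln (1 + b * s / (c + Ae))) has_real_derivative b / (c + Ae + b * pq)) (at pq)"
    using deriv_lnterm[of "\<lambda>s. s" 1 pq "\<lambda>s. Ae" 0 c b] DERIV_ident DERIV_const De a0 by simp
  have dp_eq: "deriv (\<lambda>s. rs_tilde S q s pjq) pq = a / (c + Ad + a * pq) - b / (c + Ae + b * pq)"
    unfolding fp by (rule DERIV_imp_deriv[OF DERIV_diff[OF p1 p2]])
  have dj_eq: "deriv (\<lambda>s. rs_tilde S q pq (pjq(j := s))) (pjq j) =
      HJE S j * (b * pq / ((c + Ae) * (c + Ae + b * pq))) - HJD S j q * (a * pq / ((c + Ad) * (c + Ad + a * pq)))"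
    if j: "j < J" for j
  proof -
    have fj: "(\<lambda>s. rs_tilde S q pq (pjq(j := s))) =
      (\<lambda>s. ln (1 + a * pq / (c + (Ad + HJD S j q * (s - pjq j)))) - ln (1 + b * pq / (c + (Ae + HJE S j * (s - pjq j)))))"
    proof (rule ext)
      fix s
      have j': "j < nJ S" using j J_def by simp
      show "rs_tilde S q pq (pjq(j := s)) = ln (1 + a * pq / (c + (Ad + HJD S j q * (s - pjq j)))) - ln (1 + b * pq / (c + (Ae + HJE S j * (s - pjq j))))"
        unfolding rs_tilde_def r_qq_def r_qe_def sum_upd[OF j'] by (simp add: a_def b_def c_def Ad_def Ae_def J_def)
    qed
    have y1: "((\<lambda>s. Ad + HJD S j q * (s - pjq j)) has_real_derivative HJD S j q) (at (pjq j))"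
      by (rule derivative_eq_intros refl)+ simp
    have y2: "((\<lambda>s. Ae + HJE S j * (s - pjq j)) has_real_derivative HJE S j) (at (pjq j))"
      by (rule derivative_eq_intros refl)+ simp
    have q1: "((\<lambda>s. ln (1 + a * pq / (c + (Ad + HJD S j q * (s - pjq j))))) has_real_derivative
        - (HJD S j q * (a * pq / ((c + Ad) * (c + Ad + a * pq))))) (at (pjq j))"
      using deriv_lnterm[of "\<lambda>s. pq" 0 "pjq j" "\<lambda>s. Ad + HJD S j q * (s - pjq j)" "HJD S j q" c a] y1 DERIV_const Dd a0
      by (simp add: add.assoc mult.commute)
    have q2: "((\<lambda>s. ln (1 + b * pq / (c + (Ae + HJE S j * (s - pjq j))))) has_real_derivative
        - (HJE S j * (b * pq / ((c + Ae) * (c + Ae + b * pq))))) (at (pjq j))"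
      using deriv_lnterm[of "\<lambda>s. pq" 0 "pjq j" "\<lambda>s. Ae + HJE S j * (s - pjq j)" "HJE S j" c b] y2 DERIV_const De a0
      by (simp add: add.assoc mult.commute)
    show ?thesis unfolding fj by (rule DERIV_imp_deriv) (use DERIV_diff[OF q1 q2] in simp)
  qed
  define K1 where "K1 = a * pq / ((c + Ad) * (c + Ad + a * pq))"
  define K2 where "K2 = b * pq / ((c + Ae) * (c + Ae + b * pq))"
  have "(\<Sum>j<nJ S. deriv (\<lambda>s. rs_tilde S q pq (pjq(j := s))) (pjq j) * dpj j)
      = (\<Sum>j<J. K2 * (HJE S j * dpj j) - K1 * (HJD S j q * dpj j))"
    unfolding J_def[symmetric] by (rule sum.cong) (auto simp: dj_eq K1_def K2_def algebra_simps)
  also have "\<dots> = K2 * We - K1 * Wd"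
    by (simp add: sum_subtractf sum_distrib_left We_def Wd_def)
  finally have se: "(\<Sum>j<nJ S. deriv (\<lambda>s. rs_tilde S q pq (pjq(j := s))) (pjq j) * dpj j) = K2 * We - K1 * Wd" .
  have "grad_dot (nJ S) (rs_tilde S q) pq pjq dp dpj =
     (a * dp / (c + Ad + a * pq) - a * pq * Wd / ((c + Ad) * (c + Ad + a * pq)))
     - (b * dp / (c + Ae + b * pq) - b * pq * We / ((c + Ae) * (c + Ae + b * pq)))"
    unfolding grad_dot_def dp_eq se K1_def K2_def by (simp add: algebra_simps)
  then show ?thesis using dir by simp
qed
definition "hyp S q pq pjq \<longleftrightarrow> sig2 S > 0 \<and> HSD S q \<ge> 0 \<and> HSE S q \<ge> 0 \<and>
    (\<forall>j<nJ S. HJD S j q \<ge> 0 \<and> HJE S j \<ge> 0 \<and> pjq j \<ge> 0) \<and> pq \<ge> 0"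

definition "Lval S q pq pjq dp dpj = (if rs_tilde S q pq pjq > 0 then grad_dot (nJ S) (rs_tilde S q) pq pjq dp dpj
   else if rs_tilde S q pq pjq < 0 then 0 else max 0 (grad_dot (nJ S) (rs_tilde S q) pq pjq dp dpj))"

lemma rs_quot_tendsto:
  assumes "hyp S q pq pjq"
  shows "((\<lambda>t. (rs S q (pq + t * dp) (\<lambda>j. pjq j + t * dpj j) - rs S q pq pjq) / t)
     \<longlongrightarrow> Lval S q pq pjq dp dpj) (at_right 0)"
proof -
  have d: "((\<lambda>t. rs_tilde S q (pq + t * dp) (\<lambda>j. pjq j + t * dpj j)) has_real_derivative
           grad_dot (nJ S) (rs_tilde S q) pq pjq dp dpj) (at 0)"
    using assms unfolding hyp_def by (intro rs_tilde_deriv) auto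
  show ?thesis using max_quot_tendsto[OF d] unfolding rs_def Lval_def by (simp only: mult_zero_left add_0_right)
qed

lemma rs_dir:
  assumes "hyp S q pq pjq"
  shows "dir_deriv (rs S q) pq pjq dp dpj = Lval S q pq pjq dp dpj"
  unfolding dir_deriv_def by (rule tendsto_Lim[OF _ rs_quot_tendsto[OF assms]]) simp

lemma rst_quot_tendsto:
  assumes "hyp S q pq pjq"
  shows "((\<lambda>t. (rs_tilde S q (pq + t * dp) (\<lambda>j. pjq j + t * dpj j) - rs_tilde S q pq pjq) / t)
     \<longlongrightarrow> grad_dot (nJ S) (rs_tilde S q) pq pjq dp dpj) (at_right 0)"
proof -
  have d: "((\<lambda>t. rs_tilde S q (pq + t * dp) (\<lambda>j. pjq j + t * dpj j)) has_real_derivative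
           grad_dot (nJ S) (rs_tilde S q) pq pjq dp dpj) (at 0)"
    using assms unfolding hyp_def by (intro rs_tilde_deriv) auto
  then have "((\<lambda>t. rs_tilde S q (pq + t * dp) (\<lambda>j. pjq j + t * dpj j)) has_real_derivative
           grad_dot (nJ S) (rs_tilde S q) pq pjq dp dpj) (at_right 0)"
    by (rule has_field_derivative_at_within)
  then show ?thesis unfolding has_field_derivative_iff by (simp only: mult_zero_left add_0_right diff_0_right)
qed

lemma Cq_nonneg:
  assumes "hyp S q pq pjq" "Cq S q pjq"
  shows "rs_tilde S q pq pjq \<ge> 0"
proof -
  define a where "a = HSD S q"
  define b where "b = HSE S q"
  define c where "c = sig2 S"
  define Ad where "Ad = (\<Sum>j<nJ S. HJD S j q * pjq j)"
  define Ae where "Ae = (\<Sum>j<nJ S. HJE S j * pjq j)"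
  have Dd: "c + Ad > 0" unfolding c_def Ad_def using assms(1) unfolding hyp_def by (intro lnterm_pos) auto
  have De: "c + Ae > 0" unfolding c_def Ae_def using assms(1) unfolding hyp_def by (intro lnterm_pos) auto
  have pq: "pq \<ge> 0" "a \<ge> 0" "b \<ge> 0" using assms(1) unfolding hyp_def a_def b_def by auto
  have "(\<Sum>j<nJ S. (HSD S q * HJE S j - HSE S q * HJD S j q) * pjq j)
      = a * Ae - b * Ad"
    by (simp add: a_def b_def Ae_def Ad_def sum_subtractf sum_distrib_left algebra_simps)
  then have key: "a * (c + Ae) - b * (c + Ad) \<ge> 0"
    using assms(2) unfolding Cq_def a_def b_def c_def by (simp add: algebra_simps)
  have "b * pq * (c + Ad) \<le> a * pq * (c + Ae)"
  proof -
    have "b * (c + Ad) * pq \<le> a * (c + Ae) * pq" using key pq by (intro mult_right_mono) auto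
    then show ?thesis by (simp add: algebra_simps)
  qed
  then have le: "b * pq / (c + Ae) \<le> a * pq / (c + Ad)"
    using Dd De by (simp add: divide_simps)
  have p1: "1 + b * pq / (c + Ae) > 0" using pq De by (simp add: add_pos_nonneg)
  have "ln (1 + b * pq / (c + Ae)) \<le> ln (1 + a * pq / (c + Ad))"
    using le p1 by (subst ln_le_cancel_iff) auto
  then show ?thesis unfolding rs_tilde_def r_qq_def r_qe_def a_def b_def c_def Ad_def Ae_def by simp
qed

lemma hyp_of:
  assumes "valid_sys S" "q < nQ S" "Pq S pJ q pq pjq"
  shows "hyp S q pq pjq"
  using assms unfolding valid_sys_def Pq_def hyp_def by (auto simp: less_imp_le)

lemma BQ_restr: "BQGNE S p pJ \<Longrightarrow> restricted_BQGNE S p pJ"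
  unfolding BQGNE_def restricted_BQGNE_def Pq_sm_def by blast

lemma part_d:
  assumes v: "valid_sys S" and Q: "QGNE_sm S p pJ"
  shows "restricted_BQGNE S p pJ"
  unfolding restricted_BQGNE_def
proof (intro allI impI conjI)
  fix q assume q: "q < nQ S"
  have own: "Pq_sm S pJ q (p q) (\<lambda>j. pJ j q)" and
    g: "\<And>pq pjq. Pq_sm S pJ q pq pjq \<Longrightarrow>
        grad_dot (nJ S) (rs_tilde S q) (p q) (\<lambda>j. pJ j q) (pq - p q) (\<lambda>j. pjq j - pJ j q) \<le> 0"
    using Q q unfolding QGNE_sm_def by auto
  show "Pq S pJ q (p q) (\<lambda>j. pJ j q)" using own unfolding Pq_sm_def by simp
  then have h: "hyp S q (p q) (\<lambda>j. pJ j q)" using hyp_of v q by blast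
  fix pq pjq assume "Pq_sm S pJ q pq pjq"
  then have "grad_dot (nJ S) (rs_tilde S q) (p q) (\<lambda>j. pJ j q) (pq - p q) (\<lambda>j. pjq j - pJ j q) \<le> 0"
    by (rule g)
  then show "dir_deriv (rs S q) (p q) (\<lambda>j. pJ j q) (pq - p q) (\<lambda>j. pjq j - pJ j q) \<le> 0"
    unfolding rs_dir[OF h] Lval_def by auto
qed

lemma part_c:
  assumes v: "valid_sys S" and R: "restricted_BQGNE S p pJ" and C: "\<forall>q<nQ S. Cq S q (\<lambda>j. pJ j q)"
  shows "QGNE_sm S p pJ"
  unfolding QGNE_sm_def
proof (intro allI impI conjI)
  fix q assume q: "q < nQ S"
  have own: "Pq S pJ q (p q) (\<lambda>j. pJ j q)" and
    g: "\<And>pq pjq. Pq_sm S pJ q pq pjq \<Longrightarrow>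
        dir_deriv (rs S q) (p q) (\<lambda>j. pJ j q) (pq - p q) (\<lambda>j. pjq j - pJ j q) \<le> 0"
    using R q unfolding restricted_BQGNE_def by auto
  show "Pq_sm S pJ q (p q) (\<lambda>j. pJ j q)" using own C q unfolding Pq_sm_def by simp
  have h: "hyp S q (p q) (\<lambda>j. pJ j q)" using hyp_of v q own by blast
  have nn: "rs_tilde S q (p q) (\<lambda>j. pJ j q) \<ge> 0" using Cq_nonneg[OF h] C q by simp
  fix pq pjq assume "Pq_sm S pJ q pq pjq"
  then have "dir_deriv (rs S q) (p q) (\<lambda>j. pJ j q) (pq - p q) (\<lambda>j. pjq j - pJ j q) \<le> 0"
    by (rule g)
  then show "grad_dot (nJ S) (rs_tilde S q) (p q) (\<lambda>j. pJ j q) (pq - p q) (\<lambda>j. pjq j - pJ j q) \<le> 0"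
    unfolding rs_dir[OF h] Lval_def using nn by (auto split: if_splits)
qed
lemma compact_PiE_UNIV:
  fixes A :: "'i \<Rightarrow> 'b::topological_space set"
  assumes "\<And>i. compact (A i)"
  shows "compact (PiE UNIV A)"
proof -
  have "compactin (product_topology (\<lambda>_. euclidean) UNIV) (PiE UNIV A)"
    using assms by (simp add: compactin_PiE compactin_euclidean_iff)
  then show ?thesis by (simp add: euclidean_product_topology compactin_euclidean_iff)
qed

lemma cont_fst_coord [continuous_intros]: "continuous_on S (\<lambda>x::(('a \<Rightarrow> 'b::topological_space) \<times> 'c::topological_space). fst x i)"
  by (rule continuous_on_product_then_coordinatewise) (rule continuous_on_fst[OF continuous_on_id])

lemma cont_snd_coord [continuous_intros]:
  "continuous_on S (\<lambda>x::('c::topological_space \<times> ('a \<Rightarrow> 'd \<Rightarrow> 'b::topological_space)). snd x j r)"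
proof -
  have "continuous_on S (\<lambda>x::('c \<times> ('a \<Rightarrow> 'd \<Rightarrow> 'b)). snd x j)"
    by (rule continuous_on_product_then_coordinatewise) (rule continuous_on_snd[OF continuous_on_id])
  then show ?thesis by (rule continuous_on_product_then_coordinatewise)
qed

definition box1 :: "sys \<Rightarrow> (nat \<Rightarrow> real) set" where
  "box1 S = PiE UNIV (\<lambda>q. if q < nQ S then {0..Pw S q} else {0})"
definition box2 :: "sys \<Rightarrow> (nat \<Rightarrow> nat \<Rightarrow> real) set" where
  "box2 S = PiE UNIV (\<lambda>j. PiE UNIV (\<lambda>q. if j < nJ S \<and> q < nQ S then {0..PJw S j} else {0}))"
definition Kset :: "sys \<Rightarrow> ((nat \<Rightarrow> real) \<times> (nat \<Rightarrow> nat \<Rightarrow> real)) set" where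
  "Kset S = (box1 S \<times> box2 S) \<inter> {x. \<forall>j<nJ S. (\<Sum>r<nQ S. snd x j r) \<le> PJw S j}"
definition Ksm :: "sys \<Rightarrow> ((nat \<Rightarrow> real) \<times> (nat \<Rightarrow> nat \<Rightarrow> real)) set" where
  "Ksm S = Kset S \<inter> {x. \<forall>q<nQ S. Cq S q (\<lambda>j. snd x j q)}"

lemma compact_Kset: "compact (Kset S)"
proof -
  have c1: "compact (box1 S)" unfolding box1_def by (rule compact_PiE_UNIV) auto
  have c2: "compact (box2 S)" unfolding box2_def
    by (rule compact_PiE_UNIV, rule compact_PiE_UNIV) auto
  have "{x::((nat \<Rightarrow> real) \<times> (nat \<Rightarrow> nat \<Rightarrow> real)). \<forall>j<nJ S. (\<Sum>r<nQ S. snd x j r) \<le> PJw S j}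
      = (\<Inter>j\<in>{..<nJ S}. {x. (\<Sum>r<nQ S. snd x j r) \<le> PJw S j})" by auto
  moreover have "closed (\<Inter>j\<in>{..<nJ S}. {x::((nat \<Rightarrow> real) \<times> (nat \<Rightarrow> nat \<Rightarrow> real)). (\<Sum>r<nQ S. snd x j r) \<le> PJw S j})"
    by (intro closed_INT ballI closed_Collect_le continuous_intros)
  ultimately show ?thesis unfolding Kset_def using compact_Times[OF c1 c2] by (intro compact_Int_closed) auto
qed

lemma compact_Ksm: "compact (Ksm S)"
proof -
  have "{x::((nat \<Rightarrow> real) \<times> (nat \<Rightarrow> nat \<Rightarrow> real)). \<forall>q<nQ S. Cq S q (\<lambda>j. snd x j q)}
      = (\<Inter>q\<in>{..<nQ S}. {x. 0 \<le> (\<Sum>j<nJ S. (HSD S q * HJE S j - HSE S q * HJD S j q) * snd x j q)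
       + (HSD S q - HSE S q) * sig2 S})" by (auto simp: Cq_def)
  moreover have "closed (\<Inter>q\<in>{..<nQ S}. {x::((nat \<Rightarrow> real) \<times> (nat \<Rightarrow> nat \<Rightarrow> real)).
       0 \<le> (\<Sum>j<nJ S. (HSD S q * HJE S j - HSE S q * HJD S j q) * snd x j q)
       + (HSD S q - HSE S q) * sig2 S})"
    by (intro closed_INT ballI closed_Collect_le continuous_intros)
  ultimately show ?thesis unfolding Ksm_def using compact_Kset by (intro compact_Int_closed) auto
qed
lemma Kset_mem: "x \<in> Kset S \<longleftrightarrow>
   (\<forall>q. fst x q \<in> (if q < nQ S then {0..Pw S q} else {0})) \<and>
   (\<forall>j q. snd x j q \<in> (if j < nJ S \<and> q < nQ S then {0..PJw S j} else {0})) \<and>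
   (\<forall>j<nJ S. (\<Sum>r<nQ S. snd x j r) \<le> PJw S j)"
  unfolding Kset_def box1_def box2_def by (cases x) (auto simp: PiE_iff)

lemma Kset_hyp: "valid_sys S \<Longrightarrow> x \<in> Kset S \<Longrightarrow> q < nQ S \<Longrightarrow> hyp S q (fst x q) (\<lambda>j. snd x j q)"
proof -
  assume v: "valid_sys S" and x: "x \<in> Kset S" and q: "q < nQ S"
  have f: "fst x q \<ge> 0" using x q unfolding Kset_mem by (metis atLeastAtMost_iff)
  have s: "snd x j q \<ge> 0" if "j < nJ S" for j using x q that unfolding Kset_mem by (metis atLeastAtMost_iff)
  show ?thesis unfolding hyp_def using v q f s unfolding valid_sys_def by (auto simp: less_imp_le)
qed

lemma hyp_pos:
  assumes "hyp S q pq pjq"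
  shows "sig2 S + (\<Sum>j<nJ S. HJD S j q * pjq j) > 0" "sig2 S + (\<Sum>j<nJ S. HJE S j * pjq j) > 0"
    "1 + HSD S q * pq / (sig2 S + (\<Sum>j<nJ S. HJD S j q * pjq j)) > 0"
    "1 + HSE S q * pq / (sig2 S + (\<Sum>j<nJ S. HJE S j * pjq j)) > 0"
proof -
  show a: "sig2 S + (\<Sum>j<nJ S. HJD S j q * pjq j) > 0" "sig2 S + (\<Sum>j<nJ S. HJE S j * pjq j) > 0"
    using assms unfolding hyp_def by (intro lnterm_pos; auto)+
  show "1 + HSD S q * pq / (sig2 S + (\<Sum>j<nJ S. HJD S j q * pjq j)) > 0"
    "1 + HSE S q * pq / (sig2 S + (\<Sum>j<nJ S. HJE S j * pjq j)) > 0"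
    using a assms unfolding hyp_def by (auto intro!: add_pos_nonneg)
qed

definition "Fb S x = (\<Sum>q<nQ S. rs_tilde S q (fst x q) (\<lambda>j. snd x j q))"
definition "Fa S x = (\<Sum>q<nQ S. rs S q (fst x q) (\<lambda>j. snd x j q))"

lemma cont_rst: "valid_sys S \<Longrightarrow> q < nQ S \<Longrightarrow> continuous_on (Kset S) (\<lambda>x. rs_tilde S q (fst x q) (\<lambda>j. snd x j q))"
proof -
  assume v: "valid_sys S" and q: "q < nQ S"
  have h: "\<And>x. x \<in> Kset S \<Longrightarrow> hyp S q (fst x q) (\<lambda>j. snd x j q)" using Kset_hyp v q by blast
  show ?thesis
  unfolding rs_tilde_def r_qq_def r_qe_def
  apply (intro continuous_intros)
  using hyp_pos[OF h] by (metis less_irrefl)+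
qed

lemma cont_Fb: "valid_sys S \<Longrightarrow> continuous_on (Kset S) (Fb S)"
  unfolding Fb_def by (intro continuous_intros cont_rst) auto

lemma cont_Fa: "valid_sys S \<Longrightarrow> continuous_on (Kset S) (Fa S)"
  unfolding Fa_def rs_def by (intro continuous_intros cont_rst) auto

lemma cvx_le: "x \<le> c \<Longrightarrow> y \<le> c \<Longrightarrow> 0 \<le> t \<Longrightarrow> t \<le> 1 \<Longrightarrow> x + t * (y - x) \<le> (c::real)"
proof -
  assume a: "x \<le> c" "y \<le> c" "0 \<le> t" "t \<le> 1"
  have "x + t * (y - x) = (1 - t) * x + t * y" by (simp add: algebra_simps)
  also have "\<dots> \<le> (1 - t) * c + t * c" using a by (intro add_mono mult_left_mono) auto
  finally show ?thesis by (simp add: algebra_simps)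
qed

lemma cvx_ge: "c \<le> x \<Longrightarrow> c \<le> y \<Longrightarrow> 0 \<le> t \<Longrightarrow> t \<le> 1 \<Longrightarrow> (c::real) \<le> x + t * (y - x)"
  using cvx_le[of "-x" "-c" "-y" t] by (simp add: algebra_simps)

lemma Pq_cvx:
  assumes "Pq S pJ q a1 f1" "Pq S pJ q a2 f2" "0 \<le> t" "t \<le> 1"
  shows "Pq S pJ q (a1 + t * (a2 - a1)) (\<lambda>j. f1 j + t * (f2 j - f1 j))"
proof -
  have e: "f1 j + t * (f2 j - f1 j) + R = (f1 j + R) + t * ((f2 j + R) - (f1 j + R))" for j R
    by (simp add: algebra_simps)
  show ?thesis unfolding Pq_def
  proof (intro conjI allI impI)
    fix j assume j: "j < nJ S"
    show "f1 j + t * (f2 j - f1 j) + (\<Sum>r\<in>{..<nQ S} - {q}. pJ j r) \<le> PJw S j"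
      unfolding e using assms j unfolding Pq_def by (intro cvx_le) auto
    show "0 \<le> f1 j + t * (f2 j - f1 j)" using assms j unfolding Pq_def by (intro cvx_ge) auto
  qed (use assms in \<open>auto simp: Pq_def intro!: cvx_le cvx_ge\<close>)
qed

lemma Cq_cvx:
  assumes "Cq S q f1" "Cq S q f2" "0 \<le> t" "t \<le> 1"
  shows "Cq S q (\<lambda>j. f1 j + t * (f2 j - f1 j))"
proof -
  define K where "K = (HSD S q - HSE S q) * sig2 S"
  define c where "c = (\<lambda>j. HSD S q * HJE S j - HSE S q * HJD S j q)"
  have "(\<Sum>j<nJ S. c j * (f1 j + t * (f2 j - f1 j))) + K
     = ((\<Sum>j<nJ S. c j * f1 j) + K) + t * (((\<Sum>j<nJ S. c j * f2 j) + K) - ((\<Sum>j<nJ S. c j * f1 j) + K))"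
    by (simp add: algebra_simps sum.distrib sum_subtractf sum_distrib_left)
  moreover have "0 \<le> \<dots>" using assms unfolding Cq_def c_def K_def by (intro cvx_ge) auto
  ultimately show ?thesis unfolding Cq_def c_def K_def by simp
qed

definition "jmask S v = (\<lambda>j. if j < nJ S then v j else (0::real))"

lemma rst_mask: "rs_tilde S q a (jmask S v) = rs_tilde S q a v"
  unfolding rs_tilde_def r_qq_def r_qe_def jmask_def by simp

lemma rs_mask: "rs S q a (jmask S v) = rs S q a v"
  unfolding rs_def rst_mask ..

lemma Cq_mask: "Cq S q (jmask S v) = Cq S q v"
  unfolding Cq_def jmask_def by simp

definition "upd S x q a v = ((fst x)(q := a), \<lambda>j r. if r = q then jmask S v j else snd x j r)"

lemma upd_in:
  assumes x: "x \<in> Kset S" and q: "q < nQ S" and P: "Pq S (snd x) q a v"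
  shows "upd S x q a v \<in> Kset S"
proof -
  have xs: "\<And>j r. j < nJ S \<Longrightarrow> r < nQ S \<Longrightarrow> 0 \<le> snd x j r"
    using x unfolding Kset_mem by (metis atLeastAtMost_iff)
  have rem: "(\<Sum>r<nQ S. g r) = g q + (\<Sum>r\<in>{..<nQ S} - {q}. g r)" for g :: "nat \<Rightarrow> real"
    using q by (subst sum.remove[of _ q]) auto
  have bud: "jmask S v j + (\<Sum>r\<in>{..<nQ S} - {q}. snd x j r) \<le> PJw S j" if "j < nJ S" for j
    using P that unfolding Pq_def jmask_def by auto
  have oth: "0 \<le> (\<Sum>r\<in>{..<nQ S} - {q}. snd x j r)" if "j < nJ S" for j
    using xs that by (intro sum_nonneg) auto
  have s2: "(\<Sum>r<nQ S. snd (upd S x q a v) j r) = jmask S v j + (\<Sum>r\<in>{..<nQ S} - {q}. snd x j r)" for j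
    unfolding rem by (simp add: upd_def)
  show ?thesis unfolding Kset_mem
  proof (intro conjI allI impI)
    fix r
    have fx: "fst x r \<in> (if r < nQ S then {0..Pw S r} else {0})" using x unfolding Kset_mem by blast
    show "fst (upd S x q a v) r \<in> (if r < nQ S then {0..Pw S r} else {0})"
      using fx P q unfolding upd_def Pq_def by auto
  next
    fix j r show "snd (upd S x q a v) j r \<in> (if j < nJ S \<and> r < nQ S then {0..PJw S j} else {0})"
    proof (cases "r = q")
      case True
      then show ?thesis using P q bud[of j] oth[of j] unfolding upd_def Pq_def jmask_def by auto
    next
      case False
      then show ?thesis using x unfolding upd_def Kset_mem by auto
    qed
  next
    fix j assume "j < nJ S"
    then show "(\<Sum>r<nQ S. snd (upd S x q a v) j r) \<le> PJw S j" unfolding s2 using bud by auto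
  qed
qed
lemma upd_in_sm:
  assumes x: "x \<in> Ksm S" and q: "q < nQ S" and P: "Pq_sm S (snd x) q a v"
  shows "upd S x q a v \<in> Ksm S"
proof -
  have "upd S x q a v \<in> Kset S" using upd_in x q P unfolding Ksm_def Pq_sm_def by auto
  moreover have "Cq S r (\<lambda>j. snd (upd S x q a v) j r)" if r: "r < nQ S" for r
  proof (cases "r = q")
    case True
    then have "(\<lambda>j. snd (upd S x q a v) j r) = jmask S v" unfolding upd_def by auto
    then show ?thesis using P Cq_mask[of S q v] True unfolding Pq_sm_def by simp
  next
    case False
    then have "(\<lambda>j. snd (upd S x q a v) j r) = (\<lambda>j. snd x j r)" unfolding upd_def by auto
    then show ?thesis using x r unfolding Ksm_def by simp
  qed
  ultimately show ?thesis unfolding Ksm_def by auto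
qed

lemma F_upd:
  fixes g :: "nat \<Rightarrow> real \<Rightarrow> (nat \<Rightarrow> real) \<Rightarrow> real"
  assumes q: "q < nQ S"
  shows "(\<Sum>r<nQ S. g r (fst (upd S x q a v) r) (\<lambda>j. snd (upd S x q a v) j r))
     = (\<Sum>r<nQ S. g r (fst x r) (\<lambda>j. snd x j r)) - g q (fst x q) (\<lambda>j. snd x j q) + g q a (jmask S v)"
proof -
  have rem: "(\<Sum>r<nQ S. h r) = h q + (\<Sum>r\<in>{..<nQ S} - {q}. h r)" for h :: "nat \<Rightarrow> real"
    using q by (subst sum.remove[of _ q]) auto
  have "(\<Sum>r\<in>{..<nQ S} - {q}. g r (fst (upd S x q a v) r) (\<lambda>j. snd (upd S x q a v) j r))
      = (\<Sum>r\<in>{..<nQ S} - {q}. g r (fst x r) (\<lambda>j. snd x j r))"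
    by (rule sum.cong) (auto simp: upd_def)
  moreover have "(\<lambda>j. snd (upd S x q a v) j q) = jmask S v" unfolding upd_def by auto
  ultimately show ?thesis unfolding rem[of "\<lambda>r. g r (fst (upd S x q a v) r) (\<lambda>j. snd (upd S x q a v) j r)"]
      rem[of "\<lambda>r. g r (fst x r) (\<lambda>j. snd x j r)"] by (simp add: upd_def)
qed

lemma lim_le0:
  assumes "(f \<longlongrightarrow> L) (at_right (0::real))" "\<And>t. 0 < t \<Longrightarrow> t \<le> 1 \<Longrightarrow> f t \<le> 0"
  shows "L \<le> (0::real)"
proof -
  have "eventually (\<lambda>t. f t \<le> 0) (at_right 0)"
    unfolding eventually_at_right_field using assms(2) by (intro exI[of _ 1]) auto
  then show ?thesis using tendsto_upperbound[OF assms(1)] by simp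
qed

lemma own_Pq:
  assumes x: "x \<in> Kset S" and q: "q < nQ S"
  shows "Pq S (snd x) q (fst x q) (\<lambda>j. snd x j q)"
proof -
  have rem: "(\<Sum>r<nQ S. h r) = h q + (\<Sum>r\<in>{..<nQ S} - {q}. h r)" for h :: "nat \<Rightarrow> real"
    using q by (subst sum.remove[of _ q]) auto
  have fx: "fst x q \<in> {0..Pw S q}" using x q unfolding Kset_mem by (metis)
  have sx: "snd x j q \<in> {0..PJw S j}" if "j < nJ S" for j using x q that unfolding Kset_mem by (metis)
  have b: "(\<Sum>r<nQ S. snd x j r) \<le> PJw S j" if "j < nJ S" for j using x that unfolding Kset_mem by blast
  show ?thesis unfolding Pq_def using fx sx b rem by auto
qed
lemma quot_nonpos: "h \<le> h0 \<Longrightarrow> 0 < t \<Longrightarrow> (h - h0) / t \<le> (0::real)"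
  by (simp add: divide_nonpos_pos)

lemma part_a:
  assumes v: "valid_sys S"
  shows "\<exists>p pJ. BQGNE S p pJ"
proof -
  have ne: "(\<lambda>_. 0, \<lambda>_ _. 0) \<in> Kset S"
    using v unfolding Kset_mem valid_sys_def by (auto simp: less_imp_le)
  obtain x where x: "x \<in> Kset S" and mx: "\<And>y. y \<in> Kset S \<Longrightarrow> Fa S y \<le> Fa S x"
    using continuous_attains_sup[OF compact_Kset _ cont_Fa[OF v]] ne by blast
  have "BQGNE S (fst x) (snd x)"
    unfolding BQGNE_def
  proof (intro allI impI conjI)
    fix q assume q: "q < nQ S"
    show own: "Pq S (snd x) q (fst x q) (\<lambda>j. snd x j q)" by (rule own_Pq[OF x q])
    have h: "hyp S q (fst x q) (\<lambda>j. snd x j q)" by (rule Kset_hyp[OF v x q])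
    fix pq pjq assume P: "Pq S (snd x) q pq pjq"
    have le: "(rs S q (fst x q + t * (pq - fst x q)) (\<lambda>j. snd x j q + t * (pjq j - snd x j q))
        - rs S q (fst x q) (\<lambda>j. snd x j q)) / t \<le> 0" if t: "0 < t" "t \<le> 1" for t
    proof -
      define a where "a = fst x q + t * (pq - fst x q)"
      define u where "u = (\<lambda>j. snd x j q + t * (pjq j - snd x j q))"
      have Pt: "Pq S (snd x) q a u" unfolding a_def u_def using Pq_cvx[OF own P] t by simp
      have "Fa S (upd S x q a u) \<le> Fa S x" by (rule mx[OF upd_in[OF x q Pt]])
      then have "rs S q a u \<le> rs S q (fst x q) (\<lambda>j. snd x j q)"
        unfolding Fa_def F_upd[where g = "rs S", OF q] rs_mask by simp
      then show ?thesis unfolding a_def u_def using t by (intro quot_nonpos) auto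
    qed
    have "Lval S q (fst x q) (\<lambda>j. snd x j q) (pq - fst x q) (\<lambda>j. pjq j - snd x j q) \<le> 0"
      by (rule lim_le0[OF rs_quot_tendsto[OF h]]) (use le in simp)
    then show "dir_deriv (rs S q) (fst x q) (\<lambda>j. snd x j q) (pq - fst x q) (\<lambda>j. pjq j - snd x j q) \<le> 0"
      unfolding rs_dir[OF h] .
  qed
  then show ?thesis by blast
qed

lemma part_b:
  assumes v: "valid_sys S" and P0: "Pset S p0 pJ0"
  shows "\<exists>p pJ. QGNE_sm S p pJ"
proof -
  define x0 where "x0 = ((\<lambda>q. if q < nQ S then p0 q else 0), (\<lambda>j q. if j < nJ S \<and> q < nQ S then pJ0 j q else 0))"
  have ne: "x0 \<in> Ksm S"
  proof -
    have nn: "\<And>j q. j < nJ S \<Longrightarrow> q < nQ S \<Longrightarrow> 0 \<le> pJ0 j q" using P0 unfolding Pset_def by auto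
    have bud: "\<And>j. j < nJ S \<Longrightarrow> (\<Sum>r<nQ S. pJ0 j r) \<le> PJw S j" using P0 unfolding Pset_def by auto
    have single: "pJ0 j q \<le> PJw S j" if "j < nJ S" "q < nQ S" for j q
    proof -
      have "pJ0 j q \<le> (\<Sum>r<nQ S. pJ0 j r)" using that nn by (intro member_le_sum) auto
      then show ?thesis using bud[OF that(1)] by linarith
    qed
    have sumeq: "(\<Sum>r<nQ S. snd x0 j r) = (\<Sum>r<nQ S. pJ0 j r)" if "j < nJ S" for j
      unfolding x0_def using that by (intro sum.cong) auto
    have cq: "Cq S q (\<lambda>j. snd x0 j q)" if "q < nQ S" for q
    proof -
      have "Cq S q (\<lambda>j. pJ0 j q)" using P0 that unfolding Pset_def by auto
      moreover have "(\<lambda>j. snd x0 j q) = jmask S (\<lambda>j. pJ0 j q)"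
        unfolding x0_def jmask_def using that by auto
      moreover note Cq_mask[of S q "\<lambda>j. pJ0 j q"]
      ultimately show ?thesis by simp
    qed
    have "x0 \<in> Kset S" unfolding Kset_mem
    proof (intro conjI allI impI)
      fix q show "fst x0 q \<in> (if q < nQ S then {0..Pw S q} else {0})" using P0 unfolding x0_def Pset_def by auto
    next
      fix j q show "snd x0 j q \<in> (if j < nJ S \<and> q < nQ S then {0..PJw S j} else {0})"
        using nn single unfolding x0_def by auto
    next
      fix j assume "j < nJ S" then show "(\<Sum>r<nQ S. snd x0 j r) \<le> PJw S j" using sumeq bud by simp
    qed
    then show ?thesis unfolding Ksm_def using cq by auto
  qed
  have cont: "continuous_on (Ksm S) (Fb S)"
    using cont_Fb[OF v] by (rule continuous_on_subset) (auto simp: Ksm_def)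
  obtain x where x: "x \<in> Ksm S" and mx: "\<And>y. y \<in> Ksm S \<Longrightarrow> Fb S y \<le> Fb S x"
    using continuous_attains_sup[OF compact_Ksm _ cont] ne by blast
  have xK: "x \<in> Kset S" using x unfolding Ksm_def by auto
  have "QGNE_sm S (fst x) (snd x)"
    unfolding QGNE_sm_def
  proof (intro allI impI conjI)
    fix q assume q: "q < nQ S"
    have ownP: "Pq S (snd x) q (fst x q) (\<lambda>j. snd x j q)" by (rule own_Pq[OF xK q])
    show own: "Pq_sm S (snd x) q (fst x q) (\<lambda>j. snd x j q)"
      using ownP x q unfolding Pq_sm_def Ksm_def by auto
    have h: "hyp S q (fst x q) (\<lambda>j. snd x j q)" by (rule Kset_hyp[OF v xK q])
    fix pq pjq assume P: "Pq_sm S (snd x) q pq pjq"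
    have le: "(rs_tilde S q (fst x q + t * (pq - fst x q)) (\<lambda>j. snd x j q + t * (pjq j - snd x j q))
        - rs_tilde S q (fst x q) (\<lambda>j. snd x j q)) / t \<le> 0" if t: "0 < t" "t \<le> 1" for t
    proof -
      define a where "a = fst x q + t * (pq - fst x q)"
      define u where "u = (\<lambda>j. snd x j q + t * (pjq j - snd x j q))"
      have Pt: "Pq_sm S (snd x) q a u" unfolding a_def u_def Pq_sm_def
        using Pq_cvx[of S "snd x" q "fst x q" "\<lambda>j. snd x j q" pq pjq t]
          Cq_cvx[of S q "\<lambda>j. snd x j q" pjq t] own P t unfolding Pq_sm_def by simp
      have "Fb S (upd S x q a u) \<le> Fb S x" by (rule mx[OF upd_in_sm[OF x q Pt]])
      then have "rs_tilde S q a u \<le> rs_tilde S q (fst x q) (\<lambda>j. snd x j q)"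
        unfolding Fb_def F_upd[where g = "rs_tilde S", OF q] rst_mask by simp
      then show ?thesis unfolding a_def u_def using t by (intro quot_nonpos) auto
    qed
    show "grad_dot (nJ S) (rs_tilde S q) (fst x q) (\<lambda>j. snd x j q) (pq - fst x q) (\<lambda>j. pjq j - snd x j q) \<le> 0"
      by (rule lim_le0[OF rst_quot_tendsto[OF h]]) (use le in simp)
  qed
  then show ?thesis by blast
qed

theorem proposition2:
  fixes S :: sys
  assumes "valid_sys S"
  shows "(\<exists>p pJ. BQGNE S p pJ)
    \<and> ((\<exists>p pJ. Pset S p pJ) \<longrightarrow>
         (\<exists>p pJ. QGNE_sm S p pJ) \<and> (\<exists>p pJ. restricted_BQGNE S p pJ))
    \<and> (\<forall>p pJ. (BQGNE S p pJ \<or> restricted_BQGNE S p pJ)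
              \<and> (\<forall>q<nQ S. Cq S q (\<lambda>j. pJ j q)) \<longrightarrow> QGNE_sm S p pJ)
    \<and> (\<forall>p pJ. QGNE_sm S p pJ \<longrightarrow> restricted_BQGNE S p pJ)"
  using part_a[OF assms] part_b[OF assms] part_d[OF assms] part_c[OF assms] BQ_restr by blast
end
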